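(* Let $(X,S)$ be an association scheme with the trivial partition $S=\{\mathbf{1},\sigma\}$, where $\mathbf{1}=\{(x,x)\mid x\in X\}$ and $\sigma=(X\times X)\setminus\mathbf{1}$, and suppose $\sharp X\geq3$. Let $F,G\colon\jmath(X,S)\to\jmath(X,S)$ be self-homotopy equivalences with $F\sim G$. Then $F=G$.
   Context: An association scheme is a pair $(X,S)$ with $X$ a finite set and $S$ a partition of $X\times X$ containing $\{(x,x)\mid x\in X\}$, closed under $g\mapsto g^*=\{(y,x)\mid(x,y)\in g\}$, such that for all $e,f,g\in S$ the number $\sharp\{y\in X\mid(x,y)\in e,(y,z)\in f\}$ is the same for all $(x,z)\in g$. The quasi-schemoid $\jmath(X,S)=(\mathcal{C},S)$ has $ob(\mathcal{C})=X$, $\mathrm{Hom}_{\mathcal{C}}(y,x)=\{(x,y)\}$, composition $(z,x)\circ(x,y)=(z,y)$, and partition $S$ of $mor(\mathcal{C})=X\times X$. A morphism of quasi-schemoids is a functor sending each block of the source partition into some block of the target partition. Product: $(\mathcal{C},S)\times(\mathcal{E},S')=(\mathcal{C}\times\mathcal{E},\{\sigma\times\tau\})$. $[1]$ has objects $0,1$ and one non-identity morphism $0\to1$; $I=([1],\{\{f\}\}_{f})$. A homotopy $H\colon F\Rightarrow G$ is a morphism $H\colon(\mathcal{C},S)\times I\to(\mathcal{D},S')$ with $H\circ\varepsilon_0=F$, $H\circ\varepsilon_1=G$ ($\varepsilon_i(a)=(a,i)$, $\varepsilon_i(f)=(f,1_i)$). $F\sim G$ means there is a homotopy $F\Rightarrow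 G$ or $G\Rightarrow F$; $F\simeq G$ means a finite chain $F=F_0\sim\cdots\sim F_n=G$. A self-homotopy equivalence of $A$ is a morphism $F\colon A\to A$ for which there is $G\colon A\to A$ with $FG\simeq1$ and $GF\simeq1$. *)

theory Defs
  imports Main "HOL-Library.Disjoint_Sets"
begin

definition is_assoc_scheme :: "'a set \<Rightarrow> ('a \<times> 'a) set set \<Rightarrow> bool" where
  "is_assoc_scheme X S \<longleftrightarrow>
     finite X \<and> partition_on (X \<times> X) S \<and> Id_on X \<in> S \<and>
     (\<forall>g\<in>S. converse g \<in> S) \<and>
     (\<forall>e\<in>S. \<forall>f\<in>S. \<forall>g\<in>S. \<forall>p\<in>g. \<forall>q\<in>g.
        card {y\<in>X. (fst p, y) \<in> e \<and> (y, snd p) \<in> f}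
      = card {y\<in>X. (fst q, y) \<in> e \<and> (y, snd q) \<in> f})"

record ('o, 'm) qschemoid =
  Ob   :: "'o set"
  Mor  :: "'m set"
  Dom  :: "'m \<Rightarrow> 'o"
  Cod  :: "'m \<Rightarrow> 'o"
  Idm  :: "'o \<Rightarrow> 'm"
  Cmp  :: "'m \<Rightarrow> 'm \<Rightarrow> 'm"   (* Cmp g f = g \<circ> f, defined when Dom g = Cod f *)
  Part :: "'m set set"

definition qs_morphism ::
  "('o1, 'm1) qschemoid \<Rightarrow> ('o2, 'm2) qschemoid \<Rightarrow> ('o1 \<Rightarrow> 'o2) \<times> ('m1 \<Rightarrow> 'm2) \<Rightarrow> bool" where
  "qs_morphism A B F \<longleftrightarrow>
     (\<forall>a\<in>Ob A. fst F a \<in> Ob B) \<and>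
     (\<forall>m\<in>Mor A. snd F m \<in> Mor B \<and> Dom B (snd F m) = fst F (Dom A m)
                 \<and> Cod B (snd F m) = fst F (Cod A m)) \<and>
     (\<forall>a\<in>Ob A. snd F (Idm A a) = Idm B (fst F a)) \<and>
     (\<forall>g\<in>Mor A. \<forall>f\<in>Mor A. Dom A g = Cod A f \<longrightarrow>
         snd F (Cmp A g f) = Cmp B (snd F g) (snd F f)) \<and>
     (\<forall>\<sigma>\<in>Part A. \<exists>\<tau>\<in>Part B. snd F ` \<sigma> \<subseteq> \<tau>)"

definition fun_eq :: "('o1, 'm1) qschemoid \<Rightarrow> ('o1 \<Rightarrow> 'o2) \<times> ('m1 \<Rightarrow> 'm2)
   \<Rightarrow> ('o1 \<Rightarrow> 'o2) \<times> ('m1 \<Rightarrow> 'm2) \<Rightarrow> bool" where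
  "fun_eq A F G \<longleftrightarrow> (\<forall>a\<in>Ob A. fst F a = fst G a) \<and> (\<forall>m\<in>Mor A. snd F m = snd G m)"

definition fcomp :: "('o2 \<Rightarrow> 'o3) \<times> ('m2 \<Rightarrow> 'm3) \<Rightarrow> ('o1 \<Rightarrow> 'o2) \<times> ('m1 \<Rightarrow> 'm2)
   \<Rightarrow> ('o1 \<Rightarrow> 'o3) \<times> ('m1 \<Rightarrow> 'm3)" where
  "fcomp F G = (fst F \<circ> fst G, snd F \<circ> snd G)"

definition fid :: "('o \<Rightarrow> 'o) \<times> ('m \<Rightarrow> 'm)" where
  "fid = (id, id)"

definition qs_prod :: "('o1, 'm1) qschemoid \<Rightarrow> ('o2, 'm2) qschemoid
   \<Rightarrow> ('o1 \<times> 'o2, 'm1 \<times> 'm2) qschemoid" where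
  "qs_prod A B = \<lparr> Ob = Ob A \<times> Ob B, Mor = Mor A \<times> Mor B,
     Dom = (\<lambda>(f, g). (Dom A f, Dom B g)),
     Cod = (\<lambda>(f, g). (Cod A f, Cod B g)),
     Idm = (\<lambda>(a, b). (Idm A a, Idm B b)),
     Cmp = (\<lambda>(g1, g2) (f1, f2). (Cmp A g1 f1, Cmp B g2 f2)),
     Part = {\<sigma> \<times> \<tau> | \<sigma> \<tau>. \<sigma> \<in> Part A \<and> \<tau> \<in> Part B} \<rparr>"

text \<open>The quasi-schemoid jmath(X,S): objects X, Hom(y,x) = {(x,y)}, (z,x) o (x,y) = (z,y).\<close>
definition jmath :: "'a set \<Rightarrow> ('a \<times> 'a) set set \<Rightarrow> ('a, 'a \<times> 'a) qschemoid" where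
  "jmath X S = \<lparr> Ob = X, Mor = X \<times> X, Dom = snd, Cod = fst, Idm = (\<lambda>x. (x, x)),
     Cmp = (\<lambda>g f. (fst g, snd f)), Part = S \<rparr>"

text \<open>I = ([1], discrete partition): objects 0,1; morphisms (0,0),(1,1),(1,0) where (1,0): 0 \<rightarrow> 1
  (same convention as jmath: (j,i) is the morphism i \<rightarrow> j).\<close>
definition qsI :: "(nat, nat \<times> nat) qschemoid" where
  "qsI = \<lparr> Ob = {0, 1}, Mor = {(0, 0), (1, 1), (1, 0)}, Dom = snd, Cod = fst,
     Idm = (\<lambda>i. (i, i)), Cmp = (\<lambda>g f. (fst g, snd f)),
     Part = {{m} | m. m \<in> {(0, 0), (1, 1), (1, 0)}} \<rparr>"

definition eps :: "nat \<Rightarrow> ('o \<Rightarrow> 'o \<times> nat) \<times> ('m \<Rightarrow> 'm \<times> (nat \<times> nat))" where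
  "eps i = ((\<lambda>a. (a, i)), (\<lambda>f. (f, Idm qsI i)))"

definition homotopy ::
  "('o1, 'm1) qschemoid \<Rightarrow> ('o2, 'm2) qschemoid
   \<Rightarrow> ('o1 \<times> nat \<Rightarrow> 'o2) \<times> ('m1 \<times> (nat \<times> nat) \<Rightarrow> 'm2)
   \<Rightarrow> ('o1 \<Rightarrow> 'o2) \<times> ('m1 \<Rightarrow> 'm2) \<Rightarrow> ('o1 \<Rightarrow> 'o2) \<times> ('m1 \<Rightarrow> 'm2) \<Rightarrow> bool" where
  "homotopy A B H F G \<longleftrightarrow> qs_morphism (qs_prod A qsI) B H \<and>
     fun_eq A (fcomp H (eps 0)) F \<and> fun_eq A (fcomp H (eps 1)) G"

definition htp_rel :: "('o1, 'm1) qschemoid \<Rightarrow> ('o2, 'm2) qschemoid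
   \<Rightarrow> ('o1 \<Rightarrow> 'o2) \<times> ('m1 \<Rightarrow> 'm2) \<Rightarrow> ('o1 \<Rightarrow> 'o2) \<times> ('m1 \<Rightarrow> 'm2) \<Rightarrow> bool" where
  "htp_rel A B F G \<longleftrightarrow> (\<exists>H. homotopy A B H F G) \<or> (\<exists>H. homotopy A B H G F)"

definition htp_eq :: "('o1, 'm1) qschemoid \<Rightarrow> ('o2, 'm2) qschemoid
   \<Rightarrow> ('o1 \<Rightarrow> 'o2) \<times> ('m1 \<Rightarrow> 'm2) \<Rightarrow> ('o1 \<Rightarrow> 'o2) \<times> ('m1 \<Rightarrow> 'm2) \<Rightarrow> bool" where
  "htp_eq A B = (htp_rel A B)\<^sup>*\<^sup>*"

definition self_htp_equiv :: "('o, 'm) qschemoid \<Rightarrow> ('o \<Rightarrow> 'o) \<times> ('m \<Rightarrow> 'm) \<Rightarrow> bool" where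
  "self_htp_equiv A F \<longleftrightarrow> qs_morphism A A F \<and>
     (\<exists>G. qs_morphism A A G \<and> htp_eq A A (fcomp F G) fid \<and> htp_eq A A (fcomp G F) fid)"

end

theory Submission
  imports Defs
begin

lemma three_elems:
  assumes "card X \<ge> 3"
  obtains x y z where "x \<in> X" "y \<in> X" "z \<in> X" "x \<noteq> y" "y \<noteq> z" "x \<noteq> z"
proof -
  obtain T where "T \<subseteq> X" "card T = 3" using obtain_subset_with_card_n[OF assms] by blast
  then obtain a b c where "T = {a,b,c}" "a \<noteq> b" "b \<noteq> c" "a \<noteq> c" unfolding card_3_iff by auto
  moreover then have "a \<in> X" "b \<in> X" "c \<in> X" using \<open>T \<subseteq> X\<close> by auto
  ultimately show ?thesis using that[of a b c] by simp
qed

lemma key_comb: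
  fixes f g :: "'a \<Rightarrow> 'a"
  assumes fin: "finite X" and c3: "card X \<ge> 3" and fX: "f ` X \<subseteq> X" and gX: "g ` X \<subseteq> X"
    and a: "inj_on f X \<or> (\<forall>x\<in>X. \<forall>y\<in>X. f x = f y)"
    and b: "inj_on g X \<or> (\<forall>x\<in>X. \<forall>y\<in>X. g x = g y)"
    and c: "(\<forall>x\<in>X. g x = f x) \<or> (\<forall>x\<in>X. g x \<noteq> f x)"
    and d: "(\<forall>x\<in>X. \<forall>y\<in>X. x \<noteq> y \<longrightarrow> g x = f y) \<or> (\<forall>x\<in>X. \<forall>y\<in>X. x \<noteq> y \<longrightarrow> g x \<noteq> f y)"
  shows "(inj_on f X \<longleftrightarrow> inj_on g X) \<and> (inj_on f X \<longrightarrow> (\<forall>x\<in>X. f x = g x))"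
proof -
  obtain x y z where xyz: "x \<in> X" "y \<in> X" "z \<in> X" "x \<noteq> y" "y \<noteq> z" "x \<noteq> z"
    using three_elems[OF c3] by blast
  have sf: "f ` X = X" if "inj_on f X" using endo_inj_surj[OF fin fX that] .
  have sg: "g ` X = X" if "inj_on g X" using endo_inj_surj[OF fin gX that] .
  show ?thesis
  proof (cases "inj_on f X")
    case True
    note fi = True
    have "\<forall>x\<in>X. g x = f x"
    proof (rule ccontr)
      assume nc: "\<not> (\<forall>x\<in>X. g x = f x)"
      with c have c2: "\<forall>x\<in>X. g x \<noteq> f x" by blast
      show False
      proof (cases "\<forall>x\<in>X. \<forall>y\<in>X. x \<noteq> y \<longrightarrow> g x = f y")
        case True
        have e1: "g x = f y" using True xyz(1,2,4) by blast
        have e2: "g x = f z" using True xyz(1,3,6) by blast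
        from e1 e2 have "f y = f z" by simp
        from inj_onD[OF fi this xyz(2,3)] xyz(5) show False by simp
      next
        case False
        with d have d2: "\<forall>x\<in>X. \<forall>y\<in>X. x \<noteq> y \<longrightarrow> g x \<noteq> f y" by simp
        have "g x \<in> f ` X" using sf[OF fi] gX xyz(1) by auto
        then obtain w where w: "w \<in> X" "g x = f w" by auto
        show False using d2 c2 w xyz(1) by (cases "x = w") auto
      qed
    qed
    moreover then have "inj_on g X" using fi unfolding inj_on_def by simp
    ultimately show ?thesis using fi by simp
  next
    case False
    note fn = False
    with a have fc: "\<forall>x\<in>X. \<forall>y\<in>X. f x = f y" by blast
    have "\<not> inj_on g X"
    proof
      assume gi: "inj_on g X"
      show False
      proof (cases "\<forall>x\<in>X. g x = f x")
        case True
        then have "inj_on f X" using gi unfolding inj_on_def by simp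
        then show False using fn by simp
      next
        case False
        with c have c2: "\<forall>x\<in>X. g x \<noteq> f x" by blast
        show False
        proof (cases "\<forall>x\<in>X. \<forall>y\<in>X. x \<noteq> y \<longrightarrow> g x = f y")
          case True
          have e1: "g x = f z" using True xyz(1,3,6) by blast
          have e2: "g y = f z" using True xyz(2,3,5) by blast
          from e1 e2 have "g x = g y" by simp
          from inj_onD[OF gi this xyz(1,2)] xyz(4) show False by simp
        next
          case False
          with d have d2: "\<forall>x\<in>X. \<forall>y\<in>X. x \<noteq> y \<longrightarrow> g x \<noteq> f y" by simp
          have "f x \<in> g ` X" using sg[OF gi] fX xyz(1) by auto
          then obtain w where w: "w \<in> X" "f x = g w" by auto
          have "f w = f x" using fc w xyz(1) by blast
          have "g w \<noteq> f w" using c2 w(1) by blast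
          then show False using w(2) \<open>f w = f x\<close> by simp
        qed
      qed
    qed
    then show ?thesis using fn by simp
  qed
qed


lemma H_facts:
  assumes H: "qs_morphism (qs_prod (jmath X S) qsI) (jmath X S) H"
  shows H_obj: "\<And>x i. x \<in> X \<Longrightarrow> i \<in> {0,1} \<Longrightarrow> fst H (x,i) \<in> X"
    and H_mor: "\<And>x y i j. x \<in> X \<Longrightarrow> y \<in> X \<Longrightarrow> (i,j) \<in> {(0,0),(1,1),(1,0)} \<Longrightarrow>
        snd H ((x,y),(i,j)) = (fst H (x,i), fst H (y,j))"
    and H_blk: "\<And>\<sigma> m. \<sigma> \<in> S \<Longrightarrow> m \<in> {(0,0),(1,1),(1,0)} \<Longrightarrow> \<exists>\<rho>\<in>S. snd H ` (\<sigma> \<times> {m}) \<subseteq> \<rho>"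
proof -
  fix x i assume "x \<in> X" "(i::nat) \<in> {0,1}"
  then show "fst H (x,i) \<in> X" using H unfolding qs_morphism_def qs_prod_def jmath_def qsI_def by auto
next
  fix x y i j assume a: "x \<in> X" "y \<in> X" "((i::nat),(j::nat)) \<in> {(0,0),(1,1),(1,0)}"
  have m: "((x,y),(i,j)) \<in> Mor (qs_prod (jmath X S) qsI)" using a
    unfolding qs_prod_def jmath_def qsI_def by auto
  from H m have "snd H ((x,y),(i,j)) \<in> Mor (jmath X S)"
    "Dom (jmath X S) (snd H ((x,y),(i,j))) = fst H (Dom (qs_prod (jmath X S) qsI) ((x,y),(i,j)))"
    "Cod (jmath X S) (snd H ((x,y),(i,j))) = fst H (Cod (qs_prod (jmath X S) qsI) ((x,y),(i,j)))"
    unfolding qs_morphism_def by blast+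
  then show "snd H ((x,y),(i,j)) = (fst H (x,i), fst H (y,j))"
    unfolding qs_prod_def jmath_def qsI_def by (simp add: prod_eq_iff)
next
  fix \<sigma> m assume a: "\<sigma> \<in> S" "(m::nat\<times>nat) \<in> {(0,0),(1,1),(1,0)}"
  have "\<sigma> \<times> {m} \<in> Part (qs_prod (jmath X S) qsI)" using a
    unfolding qs_prod_def jmath_def qsI_def by auto
  then show "\<exists>\<rho>\<in>S. snd H ` (\<sigma> \<times> {m}) \<subseteq> \<rho>" using H
    unfolding qs_morphism_def by (simp add: jmath_def)
qed

lemma dichot:
  assumes S: "S = {Id_on X, X \<times> X - Id_on X}" and "\<exists>\<rho>\<in>S. \<phi> ` B \<subseteq> \<rho>"
  shows "(\<forall>p\<in>B. fst (\<phi> p) = snd (\<phi> p)) \<or> (\<forall>p\<in>B. fst (\<phi> p) \<noteq> snd (\<phi> p))"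
proof -
  obtain \<rho> where r: "\<rho> \<in> S" "\<phi> ` B \<subseteq> \<rho>" using assms(2) by blast
  show ?thesis
  proof (cases "\<rho> = Id_on X")
    case True
    from r(2) True have "\<phi> ` B \<subseteq> Id_on X" by simp
    then have A: "\<forall>p\<in>B. \<phi> p \<in> Id_on X" by (simp add: image_subset_iff)
    have "fst q = snd q" if "q \<in> Id_on X" for q using that by (cases q) (simp add: Id_on_iff)
    then show ?thesis using A by blast
  next
    case False
    from r(1) S False have "\<rho> = X \<times> X - Id_on X" by simp
    with r(2) have "\<phi> ` B \<subseteq> X \<times> X - Id_on X" by simp
    then have A: "\<forall>p\<in>B. \<phi> p \<in> X \<times> X - Id_on X" by (simp add: image_subset_iff)
    have "fst q \<noteq> snd q" if "q \<in> X \<times> X - Id_on X" for q using that by (cases q) (auto simp add: Id_on_iff)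
    then show ?thesis using A by blast
  qed
qed

lemma disj_mono: "P1 \<or> Q1 \<Longrightarrow> (P1 \<Longrightarrow> P2) \<Longrightarrow> (Q1 \<Longrightarrow> Q2) \<Longrightarrow> P2 \<or> Q2"
  by blast

lemma dichot_xy:
  assumes S: "S = {Id_on X, X \<times> X - Id_on X}"
    and H: "qs_morphism (qs_prod (jmath X S) qsI) (jmath X S) H"
    and m: "(i,j) \<in> {(0,0),(1,1),(1,0)}" and \<sigma>: "\<sigma> \<in> S"
  shows "(\<forall>x\<in>X. \<forall>y\<in>X. (x,y)\<in>\<sigma> \<longrightarrow> fst H (x,i) = fst H (y,j)) \<or>
         (\<forall>x\<in>X. \<forall>y\<in>X. (x,y)\<in>\<sigma> \<longrightarrow> fst H (x,i) \<noteq> fst H (y,j))"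
proof -
  have D: "(\<forall>p\<in>\<sigma> \<times> {(i,j)}. fst (snd H p) = snd (snd H p)) \<or>
        (\<forall>p\<in>\<sigma> \<times> {(i,j)}. fst (snd H p) \<noteq> snd (snd H p))"
    by (rule dichot[OF S H_blk[OF H \<sigma> m]])
  have hm: "\<And>x y. x \<in> X \<Longrightarrow> y \<in> X \<Longrightarrow> snd H ((x,y),(i,j)) = (fst H (x,i), fst H (y,j))"
    using H_mor[OF H _ _ m] by blast
  from D show ?thesis
  proof
    assume A: "\<forall>p\<in>\<sigma> \<times> {(i,j)}. fst (snd H p) = snd (snd H p)"
    show ?thesis
    proof (rule disjI1, intro ballI impI)
      fix x y assume xy: "x \<in> X" "y \<in> X" "(x,y) \<in> \<sigma>"
      then have "((x,y),(i,j)) \<in> \<sigma> \<times> {(i,j)}" by simp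
      with A have "fst (snd H ((x,y),(i,j))) = snd (snd H ((x,y),(i,j)))" by blast
      then show "fst H (x,i) = fst H (y,j)" using hm[OF xy(1,2)] by simp
    qed
  next
    assume A: "\<forall>p\<in>\<sigma> \<times> {(i,j)}. fst (snd H p) \<noteq> snd (snd H p)"
    show ?thesis
    proof (rule disjI2, intro ballI impI)
      fix x y assume xy: "x \<in> X" "y \<in> X" "(x,y) \<in> \<sigma>"
      then have "((x,y),(i,j)) \<in> \<sigma> \<times> {(i,j)}" by simp
      with A have "fst (snd H ((x,y),(i,j))) \<noteq> snd (snd H ((x,y),(i,j)))" by blast
      then show "fst H (x,i) \<noteq> fst H (y,j)" using hm[OF xy(1,2)] by simp
    qed
  qed
qed

lemma htp_step:
  assumes S: "S = {Id_on X, X \<times> X - Id_on X}" and c3: "card X \<ge> 3"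
    and H: "qs_morphism (qs_prod (jmath X S) qsI) (jmath X S) H"
  shows "(inj_on (\<lambda>x. fst H (x,0)) X \<longleftrightarrow> inj_on (\<lambda>x. fst H (x,1)) X) \<and>
     (inj_on (\<lambda>x. fst H (x,0)) X \<longrightarrow> (\<forall>x\<in>X. fst H (x,0) = fst H (x,1)))"
proof -
  define f where "f = (\<lambda>x. fst H (x,0::nat))"
  define g where "g = (\<lambda>x. fst H (x,1::nat))"
  have fin: "finite X" using c3 card.infinite by fastforce
  have fX: "f ` X \<subseteq> X" using H_obj[OF H] unfolding f_def by auto
  have gX: "g ` X \<subseteq> X" using H_obj[OF H] unfolding g_def by auto
  have IS: "Id_on X \<in> S" and OS: "X \<times> X - Id_on X \<in> S" using S by auto
  have off: "\<And>x y. x \<in> X \<Longrightarrow> y \<in> X \<Longrightarrow> (x,y) \<in> X \<times> X - Id_on X \<longleftrightarrow> x \<noteq> y"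
    by (auto simp: Id_on_iff)
  have dia: "\<And>x y. (x,y) \<in> Id_on X \<longleftrightarrow> x = y \<and> x \<in> X"
    by (auto simp: Id_on_iff)
  have DO: "\<And>i j. (i,j) \<in> {(0,0),(1,1),(1,0)} \<Longrightarrow>
     (\<forall>x\<in>X. \<forall>y\<in>X. x \<noteq> y \<longrightarrow> fst H (x,i) = fst H (y,j)) \<or>
     (\<forall>x\<in>X. \<forall>y\<in>X. x \<noteq> y \<longrightarrow> fst H (x,i) \<noteq> fst H (y,j))"
  proof -
    fix i j assume m: "((i::nat),(j::nat)) \<in> {(0,0),(1,1),(1,0)}"
    from dichot_xy[OF S H m OS] show "?thesis i j"
    proof (rule disj_mono)
      assume A: "\<forall>x\<in>X. \<forall>y\<in>X. (x,y) \<in> X \<times> X - Id_on X \<longrightarrow> fst H (x,i) = fst H (y,j)"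
      show "\<forall>x\<in>X. \<forall>y\<in>X. x \<noteq> y \<longrightarrow> fst H (x,i) = fst H (y,j)"
      proof (intro ballI impI)
        fix x y assume xy: "x \<in> X" "y \<in> X" "x \<noteq> y"
        then have "(x,y) \<in> X \<times> X - Id_on X" using off by blast
        then show "fst H (x,i) = fst H (y,j)" using A xy by blast
      qed
    next
      assume A: "\<forall>x\<in>X. \<forall>y\<in>X. (x,y) \<in> X \<times> X - Id_on X \<longrightarrow> fst H (x,i) \<noteq> fst H (y,j)"
      show "\<forall>x\<in>X. \<forall>y\<in>X. x \<noteq> y \<longrightarrow> fst H (x,i) \<noteq> fst H (y,j)"
      proof (intro ballI impI)
        fix x y assume xy: "x \<in> X" "y \<in> X" "x \<noteq> y"
        then have "(x,y) \<in> X \<times> X - Id_on X" using off by blast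
        then show "fst H (x,i) \<noteq> fst H (y,j)" using A xy by blast
      qed
    qed
  qed
  have DI: "(\<forall>x\<in>X. fst H (x,1) = fst H (x,0)) \<or> (\<forall>x\<in>X. fst H (x,1) \<noteq> fst H (x,0))"
  proof -
    have m: "((1::nat),(0::nat)) \<in> {(0,0),(1,1),(1,0)}" by simp
    have dd: "\<And>x. x \<in> X \<Longrightarrow> (x,x) \<in> Id_on X" using dia by blast
    from dichot_xy[OF S H m IS] show ?thesis
      by (rule disj_mono) (use dd in blast)+
  qed
  have inj_or: "inj_on h X \<or> (\<forall>x\<in>X. \<forall>y\<in>X. h x = h y)"
    if "(\<forall>x\<in>X. \<forall>y\<in>X. x \<noteq> y \<longrightarrow> h x = h y) \<or> (\<forall>x\<in>X. \<forall>y\<in>X. x \<noteq> y \<longrightarrow> h x \<noteq> h y)"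
    for h :: "'a \<Rightarrow> 'a"
    using that
  proof
    assume A: "\<forall>x\<in>X. \<forall>y\<in>X. x \<noteq> y \<longrightarrow> h x = h y"
    have "\<forall>x\<in>X. \<forall>y\<in>X. h x = h y"
    proof (intro ballI)
      fix x y assume "x \<in> X" "y \<in> X"
      show "h x = h y"
      proof (cases "x = y")
        case True then show ?thesis by simp
      next
        case False then show ?thesis using A \<open>x \<in> X\<close> \<open>y \<in> X\<close> by blast
      qed
    qed
    then show ?thesis by (rule disjI2)
  next
    assume "\<forall>x\<in>X. \<forall>y\<in>X. x \<noteq> y \<longrightarrow> h x \<noteq> h y"
    then have "inj_on h X" unfolding inj_on_def by blast
    then show ?thesis by (rule disjI1)
  qed
  have a: "inj_on f X \<or> (\<forall>x\<in>X. \<forall>y\<in>X. f x = f y)"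
    unfolding f_def by (rule inj_or, rule DO) simp
  have b: "inj_on g X \<or> (\<forall>x\<in>X. \<forall>y\<in>X. g x = g y)"
    unfolding g_def by (rule inj_or, rule DO) simp
  have c: "(\<forall>x\<in>X. g x = f x) \<or> (\<forall>x\<in>X. g x \<noteq> f x)"
    using DI unfolding f_def g_def .
  have d: "(\<forall>x\<in>X. \<forall>y\<in>X. x \<noteq> y \<longrightarrow> g x = f y) \<or> (\<forall>x\<in>X. \<forall>y\<in>X. x \<noteq> y \<longrightarrow> g x \<noteq> f y)"
    unfolding f_def g_def by (rule DO) simp
  from key_comb[OF fin c3 fX gX a b c d] show ?thesis unfolding f_def g_def .
qed

lemma htp_rel_inj:
  assumes S: "S = {Id_on X, X \<times> X - Id_on X}" and c3: "card X \<ge> 3"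
    and R: "htp_rel (jmath X S) (jmath X S) K L"
  shows "(inj_on (fst K) X \<longleftrightarrow> inj_on (fst L) X) \<and> (inj_on (fst K) X \<longrightarrow> (\<forall>x\<in>X. fst K x = fst L x))"
proof -
  have one: "(inj_on (fst K) X \<longleftrightarrow> inj_on (fst L) X) \<and> (inj_on (fst K) X \<longrightarrow> (\<forall>x\<in>X. fst K x = fst L x))"
    if hom: "homotopy (jmath X S) (jmath X S) H K L" for H K L
  proof -
    have Hm: "qs_morphism (qs_prod (jmath X S) qsI) (jmath X S) H"
      and e0: "fun_eq (jmath X S) (fcomp H (eps 0)) K" and e1: "fun_eq (jmath X S) (fcomp H (eps 1)) L"
      using hom unfolding homotopy_def by auto
    have k: "\<forall>a\<in>X. fst K a = fst H (a,0)" using e0 unfolding fun_eq_def fcomp_def eps_def jmath_def by simp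
    have l: "\<forall>a\<in>X. fst L a = fst H (a,1)" using e1 unfolding fun_eq_def fcomp_def eps_def jmath_def by simp
    have ik: "inj_on (fst K) X \<longleftrightarrow> inj_on (\<lambda>x. fst H (x,0)) X" by (rule inj_on_cong) (use k in simp)
    have il: "inj_on (fst L) X \<longleftrightarrow> inj_on (\<lambda>x. fst H (x,1)) X" by (rule inj_on_cong) (use l in simp)
    from htp_step[OF S c3 Hm] ik il k l show ?thesis by simp
  qed
  from R show ?thesis unfolding htp_rel_def
  proof
    assume "\<exists>H. homotopy (jmath X S) (jmath X S) H K L"
    then show ?thesis using one by blast
  next
    assume "\<exists>H. homotopy (jmath X S) (jmath X S) H L K"
    then obtain H where "homotopy (jmath X S) (jmath X S) H L K" by blast
    from one[OF this] show ?thesis by auto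
  qed
qed

lemma htp_eq_inj:
  assumes S: "S = {Id_on X, X \<times> X - Id_on X}" and c3: "card X \<ge> 3"
    and R: "htp_eq (jmath X S) (jmath X S) K L"
  shows "inj_on (fst K) X \<longleftrightarrow> inj_on (fst L) X"
  using R unfolding htp_eq_def
proof (induction rule: rtranclp_induct)
  case base
  then show ?case by simp
next
  case (step y z)
  then show ?case using htp_rel_inj[OF S c3 step(2)] by simp
qed

lemma self_inj:
  assumes S: "S = {Id_on X, X \<times> X - Id_on X}" and c3: "card X \<ge> 3"
    and F: "self_htp_equiv (jmath X S) F"
  shows "inj_on (fst F) X"
proof -
  obtain G where "htp_eq (jmath X S) (jmath X S) (fcomp G F) fid"
    using F unfolding self_htp_equiv_def by blast
  from htp_eq_inj[OF S c3 this] have "inj_on (fst G \<circ> fst F) X"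
    unfolding fcomp_def fid_def by simp
  then show ?thesis by (rule inj_on_imageI2)
qed

lemma mor_form:
  assumes "qs_morphism (jmath X S) (jmath X S) F" and "m \<in> X \<times> X"
  shows "snd F m = (fst F (fst m), fst F (snd m))"
proof -
  have "m \<in> Mor (jmath X S)" using assms(2) by (simp add: jmath_def)
  with assms(1) have "Dom (jmath X S) (snd F m) = fst F (Dom (jmath X S) m)"
    "Cod (jmath X S) (snd F m) = fst F (Cod (jmath X S) m)"
    unfolding qs_morphism_def by blast+
  then show ?thesis by (simp add: jmath_def prod_eq_iff)
qed

theorem lemma4p3:
  fixes X :: "'a set" and S :: "('a \<times> 'a) set set"
    and F G :: "('a \<Rightarrow> 'a) \<times> ('a \<times> 'a \<Rightarrow> 'a \<times> 'a)"
  assumes "is_assoc_scheme X S"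
    and "S = {Id_on X, (X \<times> X) - Id_on X}"
    and "card X \<ge> 3"
    and "self_htp_equiv (jmath X S) F"
    and "self_htp_equiv (jmath X S) G"
    and "htp_rel (jmath X S) (jmath X S) F G"
  shows "fun_eq (jmath X S) F G"
proof -
  have iF: "inj_on (fst F) X" using self_inj[OF assms(2,3,4)] .
  have ob: "\<forall>x\<in>X. fst F x = fst G x" using htp_rel_inj[OF assms(2,3,6)] iF by blast
  have mF: "qs_morphism (jmath X S) (jmath X S) F" using assms(4) unfolding self_htp_equiv_def by blast
  have mG: "qs_morphism (jmath X S) (jmath X S) G" using assms(5) unfolding self_htp_equiv_def by blast
  have "\<forall>m\<in>X \<times> X. snd F m = snd G m"
  proof
    fix m assume m: "m \<in> X \<times> X"
    then have "fst m \<in> X" "snd m \<in> X" by auto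
    then show "snd F m = snd G m" using mor_form[OF mF m] mor_form[OF mG m] ob by simp
  qed
  then show ?thesis using ob unfolding fun_eq_def jmath_def by simp
qed

end
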